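(* For all $\lambda\mu\mathrm{T}$-terms $t_1,t_2,t_3$: if $t_1\to_B t_2\to_A t_3$, then there is a term $t_4$ with $t_1\to_A t_4$ and $t_4\twoheadrightarrow_{AB}t_3$. Consequently, if $t_1\twoheadrightarrow_B t_2\to_A t_3$, then there is $t_4$ with $t_1\to_A t_4\twoheadrightarrow_{AB} t_3$.
   Context: The calculus $\lambda\mu\mathrm{T}$ (raw terms). Types: $\rho,\sigma,\tau ::= \mathbb{N} \mid \sigma\to\tau$. Over infinite sets of $\lambda$-variables $x,y,\dots$ and $\mu$-variables $\alpha,\beta,\gamma,\dots$, terms and commands are mutually defined by $t,r,s ::= x \mid \lambda x{:}\rho.r \mid t\,s \mid \mu\alpha{:}\rho.c \mid 0 \mid \mathsf{S}\,t \mid \mathsf{nrec}_\rho\ r\ s\ t$ and $c ::= [\alpha]t$. Terms are considered modulo renaming of bound variables; $FCV(t)$ = free $\mu$-variables; $t[x:=r]$ is capture-avoiding substitution. Numerals: $\underline{n} := \mathsf{S}^n 0$. Contexts: $E ::= \Box \mid E\,t \mid \mathsf{S}\,E \mid \mathsf{nrec}\ r\ s\ E$; $E[u]$ fills the hole with $u$. Structural substitution $t[\alpha:=\beta E]$ is homomorphic on all constructs (capture-avoiding) except $([\alpha]u)[\alpha:=\beta E] := [\beta]E[u[\alpha:=\beta E]]$ (and $([\gamma]u)[\alpha:=\beta E]:=[\gamma](u[\alpha:=\beta E])$ for $\gamma\neq\alpha$). $\to_A$ is the compatible closure (on terms and commands) of: $(\lambda x.t)r\to t[x:=r]$; $\mathsf{S}(\mu\alpha.c)\to\mu\alpha.c[\alpha:=\alpha(\mathsf{S}\,\Box)]$;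 $(\mu\alpha.c)s\to\mu\alpha.c[\alpha:=\alpha(\Box\,s)]$; $\mathsf{nrec}\ r\ s\ 0\to r$; $\mathsf{nrec}\ r\ s\ (\mathsf{S}\,\underline{n})\to s\ \underline{n}\ (\mathsf{nrec}\ r\ s\ \underline{n})$; $\mathsf{nrec}\ r\ s\ (\mu\alpha.c)\to\mu\alpha.c[\alpha:=\alpha(\mathsf{nrec}\ r\ s\ \Box)]$. $\to_B$ is the compatible closure of $\mu\alpha.[\alpha]t\to t$ (if $\alpha\notin FCV(t)$) and $[\alpha]\mu\beta.c\to c[\beta:=\alpha\,\Box]$. $\to_{AB}:=\to_A\cup\to_B$; $\twoheadrightarrow_X$ denotes the reflexive–transitive closure of $\to_X$. *)

theory Defs
  imports Main
begin

text \<open>Raw terms of lambda-mu-T, modulo alpha-conversion, represented with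
 de Bruijn indices (separately for lambda-variables and mu-variables).\<close>

datatype ty = TNat | TArr ty ty

datatype trm = Var nat | Lam ty trm | App trm trm | Mu ty cmd | Zero | S trm
  | Nrec ty trm trm trm
and cmd = Cmd nat trm

fun liftL :: "nat \<Rightarrow> trm \<Rightarrow> trm" and liftLc :: "nat \<Rightarrow> cmd \<Rightarrow> cmd" where
  "liftL k (Var i) = (if i < k then Var i else Var (Suc i))"
| "liftL k (Lam \<rho> t) = Lam \<rho> (liftL (Suc k) t)"
| "liftL k (App t s) = App (liftL k t) (liftL k s)"
| "liftL k (Mu \<rho> c) = Mu \<rho> (liftLc k c)"
| "liftL k Zero = Zero"
| "liftL k (S t) = S (liftL k t)"
| "liftL k (Nrec \<rho> r s t) = Nrec \<rho> (liftL k r) (liftL k s) (liftL k t)"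
| "liftLc k (Cmd i t) = Cmd i (liftL k t)"

fun liftM :: "nat \<Rightarrow> trm \<Rightarrow> trm" and liftMc :: "nat \<Rightarrow> cmd \<Rightarrow> cmd" where
  "liftM k (Var i) = Var i"
| "liftM k (Lam \<rho> t) = Lam \<rho> (liftM k t)"
| "liftM k (App t s) = App (liftM k t) (liftM k s)"
| "liftM k (Mu \<rho> c) = Mu \<rho> (liftMc (Suc k) c)"
| "liftM k Zero = Zero"
| "liftM k (S t) = S (liftM k t)"
| "liftM k (Nrec \<rho> r s t) = Nrec \<rho> (liftM k r) (liftM k s) (liftM k t)"
| "liftMc k (Cmd i t) = Cmd (if i < k then i else Suc i) (liftM k t)"

fun lowerM :: "nat \<Rightarrow> trm \<Rightarrow> trm" and lowerMc :: "nat \<Rightarrow> cmd \<Rightarrow> cmd" where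
  "lowerM k (Var i) = Var i"
| "lowerM k (Lam \<rho> t) = Lam \<rho> (lowerM k t)"
| "lowerM k (App t s) = App (lowerM k t) (lowerM k s)"
| "lowerM k (Mu \<rho> c) = Mu \<rho> (lowerMc (Suc k) c)"
| "lowerM k Zero = Zero"
| "lowerM k (S t) = S (lowerM k t)"
| "lowerM k (Nrec \<rho> r s t) = Nrec \<rho> (lowerM k r) (lowerM k s) (lowerM k t)"
| "lowerMc k (Cmd i t) = Cmd (if k < i then i - 1 else i) (lowerM k t)"

fun freeM :: "nat \<Rightarrow> trm \<Rightarrow> bool" and freeMc :: "nat \<Rightarrow> cmd \<Rightarrow> bool" where
  "freeM k (Var i) = False"
| "freeM k (Lam \<rho> t) = freeM k t"
| "freeM k (App t s) = (freeM k t \<or> freeM k s)"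
| "freeM k (Mu \<rho> c) = freeMc (Suc k) c"
| "freeM k Zero = False"
| "freeM k (S t) = freeM k t"
| "freeM k (Nrec \<rho> r s t) = (freeM k r \<or> freeM k s \<or> freeM k t)"
| "freeMc k (Cmd i t) = (i = k \<or> freeM k t)"

fun subst :: "nat \<Rightarrow> trm \<Rightarrow> trm \<Rightarrow> trm" and substc :: "nat \<Rightarrow> trm \<Rightarrow> cmd \<Rightarrow> cmd" where
  "subst k r (Var i) = (if i < k then Var i else if i = k then r else Var (i - 1))"
| "subst k r (Lam \<rho> t) = Lam \<rho> (subst (Suc k) (liftL 0 r) t)"
| "subst k r (App t s) = App (subst k r t) (subst k r s)"
| "subst k r (Mu \<rho> c) = Mu \<rho> (substc k (liftM 0 r) c)"
| "subst k r Zero = Zero"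
| "subst k r (S t) = S (subst k r t)"
| "subst k r (Nrec \<rho> r' s t) = Nrec \<rho> (subst k r r') (subst k r s) (subst k r t)"
| "substc k r (Cmd i t) = Cmd i (subst k r t)"

datatype ctx = Hole | CApp ctx trm | CS ctx | CNrec ty trm trm ctx

fun fill :: "ctx \<Rightarrow> trm \<Rightarrow> trm" where
  "fill Hole u = u"
| "fill (CApp E t) u = App (fill E u) t"
| "fill (CS E) u = S (fill E u)"
| "fill (CNrec \<rho> r s E) u = Nrec \<rho> r s (fill E u)"

fun liftLE :: "nat \<Rightarrow> ctx \<Rightarrow> ctx" where
  "liftLE k Hole = Hole"
| "liftLE k (CApp E t) = CApp (liftLE k E) (liftL k t)"
| "liftLE k (CS E) = CS (liftLE k E)"
| "liftLE k (CNrec \<rho> r s E) = CNrec \<rho> (liftL k r) (liftL k s) (liftLE k E)"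

fun liftME :: "nat \<Rightarrow> ctx \<Rightarrow> ctx" where
  "liftME k Hole = Hole"
| "liftME k (CApp E t) = CApp (liftME k E) (liftM k t)"
| "liftME k (CS E) = CS (liftME k E)"
| "liftME k (CNrec \<rho> r s E) = CNrec \<rho> (liftM k r) (liftM k s) (liftME k E)"

text \<open>Structural substitution \<open>t[\<alpha>:=\<beta> E]\<close> with \<open>\<alpha>\<close> = mu-index k, \<open>\<beta>\<close> = mu-index b
 (capture-avoiding; indices other than k are untouched).\<close>
fun ssub :: "nat \<Rightarrow> nat \<Rightarrow> ctx \<Rightarrow> trm \<Rightarrow> trm"
and ssubc :: "nat \<Rightarrow> nat \<Rightarrow> ctx \<Rightarrow> cmd \<Rightarrow> cmd" where
  "ssub k b E (Var i) = Var i"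
| "ssub k b E (Lam \<rho> t) = Lam \<rho> (ssub k b (liftLE 0 E) t)"
| "ssub k b E (App t s) = App (ssub k b E t) (ssub k b E s)"
| "ssub k b E (Mu \<rho> c) = Mu \<rho> (ssubc (Suc k) (Suc b) (liftME 0 E) c)"
| "ssub k b E Zero = Zero"
| "ssub k b E (S t) = S (ssub k b E t)"
| "ssub k b E (Nrec \<rho> r s t) = Nrec \<rho> (ssub k b E r) (ssub k b E s) (ssub k b E t)"
| "ssubc k b E (Cmd i u) =
     (if i = k then Cmd b (fill E (ssub k b E u)) else Cmd i (ssub k b E u))"

fun num :: "nat \<Rightarrow> trm" where
  "num 0 = Zero"
| "num (Suc n) = S (num n)"

inductive rootA :: "trm \<Rightarrow> trm \<Rightarrow> bool" where
  beta: "rootA (App (Lam \<rho> t) r) (subst 0 r t)"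
| muS: "rootA (S (Mu \<rho> c)) (Mu \<rho> (ssubc 0 0 (CS Hole) c))"
| muApp: "rootA (App (Mu \<rho> c) s) (Mu \<rho> (ssubc 0 0 (CApp Hole (liftM 0 s)) c))"
| nrec0: "rootA (Nrec \<rho> r s Zero) r"
| nrecS: "rootA (Nrec \<rho> r s (S (num n))) (App (App s (num n)) (Nrec \<rho> r s (num n)))"
| muNrec: "rootA (Nrec \<rho> r s (Mu \<sigma> c))
             (Mu \<sigma> (ssubc 0 0 (CNrec \<rho> (liftM 0 r) (liftM 0 s) Hole) c))"

text \<open>Root rules of B: one on terms, one on commands.
 \<open>\<mu>\<alpha>.[\<alpha>]t \<rightarrow> t\<close> if \<open>\<alpha> \<notin> FCV(t)\<close>;  \<open>[\<alpha>]\<mu>\<beta>.c \<rightarrow> c[\<beta>:=\<alpha> \<box>]\<close>.\<close>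
inductive rootBt :: "trm \<Rightarrow> trm \<Rightarrow> bool" where
  muEta: "\<not> freeM 0 t \<Longrightarrow> rootBt (Mu \<rho> (Cmd 0 t)) (lowerM 0 t)"

inductive rootBc :: "cmd \<Rightarrow> cmd \<Rightarrow> bool" where
  rename: "rootBc (Cmd a (Mu \<rho> c)) (lowerMc 0 (ssubc 0 (Suc a) Hole c))"

inductive compat :: "(trm \<Rightarrow> trm \<Rightarrow> bool) \<Rightarrow> (cmd \<Rightarrow> cmd \<Rightarrow> bool) \<Rightarrow> trm \<Rightarrow> trm \<Rightarrow> bool"
and compatc :: "(trm \<Rightarrow> trm \<Rightarrow> bool) \<Rightarrow> (cmd \<Rightarrow> cmd \<Rightarrow> bool) \<Rightarrow> cmd \<Rightarrow> cmd \<Rightarrow> bool"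
for Rt :: "trm \<Rightarrow> trm \<Rightarrow> bool" and Rc :: "cmd \<Rightarrow> cmd \<Rightarrow> bool" where
  root: "Rt t u \<Longrightarrow> compat Rt Rc t u"
| lam: "compat Rt Rc t u \<Longrightarrow> compat Rt Rc (Lam \<rho> t) (Lam \<rho> u)"
| appL: "compat Rt Rc t u \<Longrightarrow> compat Rt Rc (App t s) (App u s)"
| appR: "compat Rt Rc t u \<Longrightarrow> compat Rt Rc (App s t) (App s u)"
| mu: "compatc Rt Rc c d \<Longrightarrow> compat Rt Rc (Mu \<rho> c) (Mu \<rho> d)"
| suc: "compat Rt Rc t u \<Longrightarrow> compat Rt Rc (S t) (S u)"
| nrec1: "compat Rt Rc t u \<Longrightarrow> compat Rt Rc (Nrec \<rho> t s r) (Nrec \<rho> u s r)"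
| nrec2: "compat Rt Rc t u \<Longrightarrow> compat Rt Rc (Nrec \<rho> s t r) (Nrec \<rho> s u r)"
| nrec3: "compat Rt Rc t u \<Longrightarrow> compat Rt Rc (Nrec \<rho> s r t) (Nrec \<rho> s r u)"
| rootc: "Rc c d \<Longrightarrow> compatc Rt Rc c d"
| cmd: "compat Rt Rc t u \<Longrightarrow> compatc Rt Rc (Cmd i t) (Cmd i u)"

definition stepA :: "trm \<Rightarrow> trm \<Rightarrow> bool" where
  "stepA = compat rootA (\<lambda>_ _. False)"

definition stepB :: "trm \<Rightarrow> trm \<Rightarrow> bool" where
  "stepB = compat rootBt rootBc"

definition stepAB :: "trm \<Rightarrow> trm \<Rightarrow> bool" where
  "stepAB t u \<longleftrightarrow> stepA t u \<or> stepB t u"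

end

theory Submission imports Defs begin

type_synonym sb = "nat \<Rightarrow> nat \<times> ctx"

definition llsig :: "nat \<Rightarrow> sb \<Rightarrow> sb" where
  "llsig j \<sigma> i = (fst (\<sigma> i), liftLE j (snd (\<sigma> i)))"
definition msig :: "sb \<Rightarrow> sb" where
  "msig \<sigma> i = (case i of 0 \<Rightarrow> (0, Hole) | Suc j \<Rightarrow> (Suc (fst (\<sigma> j)), liftME 0 (snd (\<sigma> j))))"

fun gsub :: "sb \<Rightarrow> trm \<Rightarrow> trm" and gsubc :: "sb \<Rightarrow> cmd \<Rightarrow> cmd" where
  "gsub \<sigma> (Var i) = Var i"
| "gsub \<sigma> (Lam \<rho> t) = Lam \<rho> (gsub (llsig 0 \<sigma>) t)"
| "gsub \<sigma> (App t s) = App (gsub \<sigma> t) (gsub \<sigma> s)"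
| "gsub \<sigma> (Mu \<rho> c) = Mu \<rho> (gsubc (msig \<sigma>) c)"
| "gsub \<sigma> Zero = Zero"
| "gsub \<sigma> (S t) = S (gsub \<sigma> t)"
| "gsub \<sigma> (Nrec \<rho> r s t) = Nrec \<rho> (gsub \<sigma> r) (gsub \<sigma> s) (gsub \<sigma> t)"
| "gsubc \<sigma> (Cmd i t) = Cmd (fst (\<sigma> i)) (fill (snd (\<sigma> i)) (gsub \<sigma> t))"

fun gsubE :: "sb \<Rightarrow> ctx \<Rightarrow> ctx" where
  "gsubE \<sigma> Hole = Hole"
| "gsubE \<sigma> (CApp E t) = CApp (gsubE \<sigma> E) (gsub \<sigma> t)"
| "gsubE \<sigma> (CS E) = CS (gsubE \<sigma> E)"
| "gsubE \<sigma> (CNrec \<rho> r s E) = CNrec \<rho> (gsub \<sigma> r) (gsub \<sigma> s) (gsubE \<sigma> E)"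

fun cc :: "ctx \<Rightarrow> ctx \<Rightarrow> ctx" where
  "cc Hole E = E"
| "cc (CApp F t) E = CApp (cc F E) t"
| "cc (CS F) E = CS (cc F E)"
| "cc (CNrec \<rho> r s F) E = CNrec \<rho> r s (cc F E)"

definition rn :: "(nat \<Rightarrow> nat) \<Rightarrow> sb" where "rn f i = (f i, Hole)"
definition upf :: "(nat \<Rightarrow> nat) \<Rightarrow> nat \<Rightarrow> nat" where
  "upf f i = (case i of 0 \<Rightarrow> 0 | Suc j \<Rightarrow> Suc (f j))"
definition scomp :: "sb \<Rightarrow> sb \<Rightarrow> sb" where
  "scomp \<sigma> \<tau> i = (fst (\<sigma> (fst (\<tau> i))), cc (snd (\<sigma> (fst (\<tau> i)))) (gsubE \<sigma> (snd (\<tau> i))))"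
definition lk :: "nat \<Rightarrow> nat \<Rightarrow> nat" where "lk k i = (if i < k then i else Suc i)"
definition lw :: "nat \<Rightarrow> nat \<Rightarrow> nat" where "lw k i = (if k < i then i - 1 else i)"
definition ss :: "nat \<Rightarrow> nat \<Rightarrow> ctx \<Rightarrow> sb" where
  "ss k b E i = (if i = k then (b, E) else (i, Hole))"

lemma fill_cc[simp]: "fill (cc F E) x = fill F (fill E x)"
  by (induct F) auto
lemma cc_Hole[simp]: "cc E Hole = E"
  by (induct E) auto
lemma cc_assoc: "cc (cc F E) G = cc F (cc E G)"
  by (induct F) auto

lemma liftL_liftL: "i \<le> j \<Longrightarrow> liftL i (liftL j t) = liftL (Suc j) (liftL i t)"
  "i \<le> j \<Longrightarrow> liftLc i (liftLc j c) = liftLc (Suc j) (liftLc i c)"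
  by (induct t and c arbitrary: i j and i j) auto

lemma liftL_fill[simp]: "liftL j (fill E x) = fill (liftLE j E) (liftL j x)"
  by (induct E) auto
lemma liftLE_liftLE: "i \<le> j \<Longrightarrow> liftLE i (liftLE j E) = liftLE (Suc j) (liftLE i E)"
  by (induct E) (auto simp: liftL_liftL)
lemma liftLE_cc[simp]: "liftLE j (cc F E) = cc (liftLE j F) (liftLE j E)"
  by (induct F) auto
lemma liftME_cc[simp]: "liftME j (cc F E) = cc (liftME j F) (liftME j E)"
  by (induct F) auto
lemma liftL_liftM: "liftL j (liftM k t) = liftM k (liftL j t)"
  "liftLc j (liftMc k c) = liftMc k (liftLc j c)"
  by (induct t and c arbitrary: j k and j k) auto
lemma liftLE_liftME: "liftLE j (liftME k E) = liftME k (liftLE j E)"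
  by (induct E) (auto simp: liftL_liftM)

lemma llsig_rn[simp]: "llsig j (rn f) = rn f"
  by (rule ext) (simp add: llsig_def rn_def)
lemma msig_rn[simp]: "msig (rn f) = rn (upf f)"
  by (rule ext) (simp add: msig_def rn_def upf_def split: nat.split)
lemma fst_rn[simp]: "fst (rn f i) = f i" and snd_rn[simp]: "snd (rn f i) = Hole"
  by (auto simp: rn_def)
lemma upf_lk[simp]: "upf (lk k) = lk (Suc k)"
  by (rule ext) (simp add: upf_def lk_def split: nat.split)
lemma upf_lw[simp]: "upf (lw k) = lw (Suc k)"
  by (rule ext) (simp add: upf_def lw_def split: nat.split)

lemma liftM_gsub: "liftM k t = gsub (rn (lk k)) t" "liftMc k c = gsubc (rn (lk k)) c"
  by (induct t and c arbitrary: k and k) (auto simp: lk_def)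
lemma liftME_gsub: "liftME k E = gsubE (rn (lk k)) E"
  by (induct E) (auto simp: liftM_gsub)
lemma lowerM_gsub: "lowerM k t = gsub (rn (lw k)) t" "lowerMc k c = gsubc (rn (lw k)) c"
  by (induct t and c arbitrary: k and k) (auto simp: lw_def)

lemma llsig_ss[simp]: "llsig 0 (ss k b E) = ss k b (liftLE 0 E)"
  by (rule ext) (simp add: llsig_def ss_def)
lemma msig_ss[simp]: "msig (ss k b E) = ss (Suc k) (Suc b) (liftME 0 E)"
  by (rule ext) (simp add: msig_def ss_def split: nat.split)
lemma ssub_gsub: "ssub k b E t = gsub (ss k b E) t" "ssubc k b E c = gsubc (ss k b E) c"
  by (induct t and c arbitrary: k b E and k b E) (auto simp: ss_def)

lemma gsub_fill[simp]: "gsub \<sigma> (fill E x) = fill (gsubE \<sigma> E) (gsub \<sigma> x)"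
  by (induct E) auto
lemma gsubE_cc[simp]: "gsubE \<sigma> (cc F E) = cc (gsubE \<sigma> F) (gsubE \<sigma> E)"
  by (induct F) auto

lemma llsig_llsig: "llsig (Suc j) (llsig 0 \<sigma>) = llsig 0 (llsig j \<sigma>)"
  by (rule ext) (simp add: llsig_def liftLE_liftLE)
lemma llsig_msig: "llsig j (msig \<sigma>) = msig (llsig j \<sigma>)"
  by (rule ext) (simp add: llsig_def msig_def liftLE_liftME split: nat.split)

lemma fst_llsig[simp]: "fst (llsig j \<sigma> i) = fst (\<sigma> i)" and snd_llsig[simp]: "snd (llsig j \<sigma> i) = liftLE j (snd (\<sigma> i))"
  by (auto simp: llsig_def)
lemma llsig_o: "llsig j (\<lambda>a. \<sigma> (f a)) = (\<lambda>a. llsig j \<sigma> (f a))"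
  by (rule ext) (simp add: llsig_def)

lemma GL: "gsub (llsig j \<sigma>) (liftL j r) = liftL j (gsub \<sigma> r)"
  "gsubc (llsig j \<sigma>) (liftLc j c) = liftLc j (gsubc \<sigma> c)"
proof (induct r and c arbitrary: j \<sigma> and j \<sigma>)
  case (Lam x1 x2) then show ?case by (simp add: llsig_llsig[symmetric])
next
  case (Mu x1 x2) then show ?case by (simp add: llsig_msig[symmetric])
qed auto
lemma GLE: "gsubE (llsig j \<sigma>) (liftLE j E) = liftLE j (gsubE \<sigma> E)"
  by (induct E) (auto simp: GL)

lemma GRa: "gsub \<sigma> (gsub (rn f) t) = gsub (\<lambda>a. \<sigma> (f a)) t"
  "gsubc \<sigma> (gsubc (rn f) c) = gsubc (\<lambda>a. \<sigma> (f a)) c"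
proof (induct t and c arbitrary: \<sigma> f and \<sigma> f)
  case (Lam x1 x2) then show ?case by (simp add: llsig_o)
next
  case (Mu x1 x2)
  have "(\<lambda>a. msig \<sigma> (upf f a)) = msig (\<lambda>a. \<sigma> (f a))"
    by (rule ext) (simp add: msig_def upf_def split: nat.split)
  with Mu show ?case by simp
qed auto

lemma GRaE: "gsubE \<sigma> (gsubE (rn f) E) = gsubE (\<lambda>a. \<sigma> (f a)) E"
  by (induct E) (auto simp: GRa)
lemma GLE_rn: "gsubE (rn f) (liftLE j E) = liftLE j (gsubE (rn f) E)"
  using GLE[of j "rn f" E] by simp

definition rsig :: "(nat \<Rightarrow> nat) \<Rightarrow> sb \<Rightarrow> sb" where
  "rsig f \<sigma> i = (f (fst (\<sigma> i)), gsubE (rn f) (snd (\<sigma> i)))"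

lemma GRb: "gsub (rn f) (gsub \<sigma> t) = gsub (rsig f \<sigma>) t"
  "gsubc (rn f) (gsubc \<sigma> c) = gsubc (rsig f \<sigma>) c"
proof (induct t and c arbitrary: \<sigma> f and \<sigma> f)
  case (Lam x1 x2)
  have "rsig f (llsig 0 \<sigma>) = llsig 0 (rsig f \<sigma>)"
    by (rule ext) (simp add: rsig_def llsig_def GLE_rn)
  with Lam show ?case by simp
next
  case (Mu x1 x2)
  have "rsig (upf f) (msig \<sigma>) = msig (rsig f \<sigma>)"
    by (rule ext) (simp add: rsig_def msig_def liftME_gsub GRaE split: nat.split,
        simp add: rn_def lk_def upf_def)
  with Mu show ?case by simp
next
  case (Cmd x1 x2) then show ?case by (simp add: rsig_def)
qed auto
lemma GRbE: "gsubE (rn f) (gsubE \<sigma> E) = gsubE (rsig f \<sigma>) E"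
  by (induct E) (auto simp: GRb)

lemma MS: "gsubE (msig \<sigma>) (liftME 0 E) = liftME 0 (gsubE \<sigma> E)"
proof -
  have "(\<lambda>a. msig \<sigma> (lk 0 a)) = rsig (lk 0) \<sigma>"
    by (rule ext) (simp add: rsig_def msig_def lk_def liftME_gsub)
  then show ?thesis by (simp add: liftME_gsub GRaE GRbE)
qed
lemma MSt: "gsub (msig \<sigma>) (liftM 0 t) = liftM 0 (gsub \<sigma> t)"
proof -
  have "(\<lambda>a. msig \<sigma> (lk 0 a)) = rsig (lk 0) \<sigma>"
    by (rule ext) (simp add: rsig_def msig_def lk_def liftME_gsub)
  then show ?thesis by (simp add: liftM_gsub GRa GRb)
qed

lemma GC: "gsub \<sigma> (gsub \<tau> t) = gsub (scomp \<sigma> \<tau>) t"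
  "gsubc \<sigma> (gsubc \<tau> c) = gsubc (scomp \<sigma> \<tau>) c"
proof (induct t and c arbitrary: \<sigma> \<tau> and \<sigma> \<tau>)
  case (Lam x1 x2)
  have "scomp (llsig 0 \<sigma>) (llsig 0 \<tau>) = llsig 0 (scomp \<sigma> \<tau>)"
    by (rule ext) (simp add: scomp_def llsig_def GLE)
  with Lam show ?case by simp
next
  case (Mu x1 x2)
  have "scomp (msig \<sigma>) (msig \<tau>) = msig (scomp \<sigma> \<tau>)"
    by (rule ext) (simp add: scomp_def msig_def MS split: nat.split)
  with Mu show ?case by simp
next
  case (Cmd x1 x2) then show ?case by (simp add: scomp_def)
qed auto
lemma GCE: "gsubE \<sigma> (gsubE \<tau> E) = gsubE (scomp \<sigma> \<tau>) E"
  by (induct E) (auto simp: GC)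

lemma upf_id[simp]: "upf (\<lambda>i. i) = (\<lambda>i. i)"
  by (rule ext) (simp add: upf_def split: nat.split)
lemma gsub_id[simp]: "gsub (rn (\<lambda>i. i)) t = t" "gsubc (rn (\<lambda>i. i)) c = c"
  by (induct t and c) auto
lemma gsubE_id[simp]: "gsubE (rn (\<lambda>i. i)) E = E"
  by (induct E) auto

lemma rn_o: "(\<lambda>a. rn g (f a)) = rn (\<lambda>a. g (f a))"
  by (rule ext) (simp add: rn_def)

lemma SL1[simp]: "subst k r (liftL k t) = t" "substc k r (liftLc k c) = c"
  by (induct t and c arbitrary: k r and k r) auto
lemma SLE[simp]: "subst k r (fill (liftLE k E) x) = fill E (subst k r x)"
  by (induct E) auto

lemma SG: "gsub \<sigma> (subst k r t) = subst k (gsub \<sigma> r) (gsub (llsig k \<sigma>) t)"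
  "gsubc \<sigma> (substc k r c) = substc k (gsub \<sigma> r) (gsubc (llsig k \<sigma>) c)"
proof (induct t and c arbitrary: k r \<sigma> and k r \<sigma>)
  case (Lam x1 x2) then show ?case by (simp add: GL llsig_llsig)
next
  case (Mu x1 x2) then show ?case by (simp add: MSt llsig_msig)
qed auto

lemma SG_rn: "gsub (rn f) (subst k r t) = subst k (gsub (rn f) r) (gsub (rn f) t)"
  "gsubc (rn f) (substc k r c) = substc k (gsub (rn f) r) (gsubc (rn f) c)"
  using SG[of "rn f"] by simp_all

lemma LS: "k \<le> j \<Longrightarrow> liftL j (subst k r t) = subst k (liftL j r) (liftL (Suc j) t)"
  "k \<le> j \<Longrightarrow> liftLc j (substc k r c) = substc k (liftL j r) (liftLc (Suc j) c)"
proof (induct t and c arbitrary: j k r and j k r)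
  case (Lam x1 x2) then show ?case by (simp add: liftL_liftL)
next
  case (Mu x1 x2) then show ?case by (simp add: liftL_liftM)
qed auto

lemma FE: "(\<forall>i. freeM i t \<longrightarrow> f i = g i) \<Longrightarrow> gsub (rn f) t = gsub (rn g) t"
  "(\<forall>i. freeMc i c \<longrightarrow> f i = g i) \<Longrightarrow> gsubc (rn f) c = gsubc (rn g) c"
proof (induct t and c arbitrary: f g and f g)
  case (Mu x1 x2)
  have "\<forall>j. freeMc j x2 \<longrightarrow> upf f j = upf g j"
    using Mu.prems by (auto simp: upf_def split: nat.split)
  with Mu show ?case by simp
qed auto

lemma FR: "freeM k (gsub (rn f) t) \<Longrightarrow> \<exists>i. freeM i t \<and> f i = k"
  "freeMc k (gsubc (rn f) c) \<Longrightarrow> \<exists>i. freeMc i c \<and> f i = k"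
proof (induct t and c arbitrary: k f and k f)
  case (Mu x1 x2)
  from Mu.prems have "freeMc (Suc k) (gsubc (rn (upf f)) x2)" by simp
  from Mu.hyps[OF this] obtain j where "freeMc j x2" "upf f j = Suc k" by blast
  then show ?case by (cases j) (auto simp: upf_def)
next
  case (App x1 x2) then show ?case by (metis freeM.simps(3) gsub.simps(3))
next
  case (Nrec x1 x2 x3 x4) then show ?case by (metis freeM.simps(7) gsub.simps(7))
next
  case (Cmd x1 x2) then show ?case by (metis freeMc.simps fst_rn gsubc.simps fill.simps(1) snd_rn)
qed simp_all
lemma rn_oo: "(\<lambda>a. rn g (f a)) = rn (\<lambda>a. g (f a))"
  by (rule ext) (simp add: rn_def)
lemma ren_ren: "gsub (rn g) (gsub (rn f) t) = gsub (rn (\<lambda>a. g (f a))) t"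
  by (simp only: GRa rn_oo[of g f])
lemma ren_renc: "gsubc (rn g) (gsubc (rn f) t) = gsubc (rn (\<lambda>a. g (f a))) t"
  by (simp only: GRa rn_oo[of g f])
lemma ren_renE: "gsubE (rn g) (gsubE (rn f) t) = gsubE (rn (\<lambda>a. g (f a))) t"
  by (simp only: GRaE rn_oo[of g f])

lemma lift_lower: "\<not> freeM 0 t \<Longrightarrow> liftM 0 (lowerM 0 t) = t"
proof -
  assume a: "\<not> freeM 0 t"
  have "liftM 0 (lowerM 0 t) = gsub (rn (\<lambda>a. lk 0 (lw 0 a))) t"
    by (simp only: liftM_gsub lowerM_gsub ren_ren)
  also have "\<dots> = gsub (rn (\<lambda>i. i)) t"
    by (rule FE) (use a in \<open>auto simp: lk_def lw_def\<close>)
  finally show ?thesis by simp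
qed
lemma lower_lift[simp]: "lowerM 0 (liftM 0 y) = y"
proof -
  have "(\<lambda>a. lw 0 (lk 0 a)) = (\<lambda>i. i)" by (simp add: lk_def lw_def)
  then show ?thesis by (simp only: liftM_gsub lowerM_gsub ren_ren gsub_id)
qed
lemma nofree_lift[simp]: "\<not> freeM 0 (liftM 0 y)"
  using FR(1)[of 0 "lk 0" y] by (auto simp: liftM_gsub lk_def)

lemma gsub_num[simp]: "gsub \<sigma> (num n) = num n"
  by (induct n) auto
lemma liftL_num[simp]: "liftL j (num n) = num n"
  by (induct n) auto
lemma liftM_num[simp]: "liftM j (num n) = num n"
  by (induct n) auto
lemma gsub_rn_num: "gsub (rn f) t = num n \<Longrightarrow> t = num n"
proof (induct n arbitrary: t)
  case 0 then show ?case by (cases t) auto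
next
  case (Suc n) then show ?case by (cases t) auto
qed

abbreviation noC :: "cmd \<Rightarrow> cmd \<Rightarrow> bool" where "noC \<equiv> \<lambda>_ _. False"
abbreviation AA where "AA \<equiv> compat rootA noC"
abbreviation AAc where "AAc \<equiv> compatc rootA noC"
abbreviation BB where "BB \<equiv> compat rootBt rootBc"
abbreviation BBc where "BBc \<equiv> compatc rootBt rootBc"
definition ABc :: "cmd \<Rightarrow> cmd \<Rightarrow> bool" where "ABc c d \<longleftrightarrow> AAc c d \<or> BBc c d"

lemma stepAB_iff: "stepAB t u \<longleftrightarrow> AA t u \<or> BB t u"
  by (simp add: stepAB_def stepA_def stepB_def)

lemma rtp_map: assumes "R\<^sup>*\<^sup>* a b" and h: "\<And>x y. R x y \<Longrightarrow> Q (f x) (f y)" shows "Q\<^sup>*\<^sup>* (f a) (f b)"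
  using assms(1) by (induct rule: rtranclp_induct) (auto intro: rtranclp.rtrancl_into_rtrancl h)
lemma rtp_map2: assumes "R\<^sup>*\<^sup>* a b" and h: "\<And>x y. R x y \<Longrightarrow> Q\<^sup>*\<^sup>* (f x) (f y)" shows "Q\<^sup>*\<^sup>* (f a) (f b)"
  using assms(1) by (induct rule: rtranclp_induct) (auto intro: rtranclp_trans h)

lemma AB_A: "AA t u \<Longrightarrow> stepAB\<^sup>*\<^sup>* t u" by (simp add: stepAB_iff r_into_rtranclp)
lemma AB_B: "BB t u \<Longrightarrow> stepAB\<^sup>*\<^sup>* t u" by (simp add: stepAB_iff r_into_rtranclp)
lemma ABc_A: "AAc t u \<Longrightarrow> ABc\<^sup>*\<^sup>* t u" by (simp add: ABc_def r_into_rtranclp)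
lemma ABc_B: "BBc t u \<Longrightarrow> ABc\<^sup>*\<^sup>* t u" by (simp add: ABc_def r_into_rtranclp)
lemma AB_AA: "AA\<^sup>*\<^sup>* t u \<Longrightarrow> stepAB\<^sup>*\<^sup>* t u"
  using rtp_map[of AA t u stepAB "\<lambda>x. x"] by (simp add: stepAB_iff)

lemma AB_lam: "stepAB\<^sup>*\<^sup>* t u \<Longrightarrow> stepAB\<^sup>*\<^sup>* (Lam \<rho> t) (Lam \<rho> u)"
  by (erule rtp_map[where f="Lam \<rho>"]) (auto simp: stepAB_iff intro: compat_compatc.intros)
lemma AB_appL: "stepAB\<^sup>*\<^sup>* t u \<Longrightarrow> stepAB\<^sup>*\<^sup>* (App t s) (App u s)"
  by (erule rtp_map[where f="\<lambda>x. App x s"]) (auto simp: stepAB_iff intro: compat_compatc.intros)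
lemma AB_appR: "stepAB\<^sup>*\<^sup>* t u \<Longrightarrow> stepAB\<^sup>*\<^sup>* (App s t) (App s u)"
  by (erule rtp_map[where f="\<lambda>x. App s x"]) (auto simp: stepAB_iff intro: compat_compatc.intros)
lemma AB_S: "stepAB\<^sup>*\<^sup>* t u \<Longrightarrow> stepAB\<^sup>*\<^sup>* (S t) (S u)"
  by (erule rtp_map[where f="S"]) (auto simp: stepAB_iff intro: compat_compatc.intros)
lemma AB_nrec1: "stepAB\<^sup>*\<^sup>* t u \<Longrightarrow> stepAB\<^sup>*\<^sup>* (Nrec \<rho> t s r) (Nrec \<rho> u s r)"
  by (erule rtp_map[where f="\<lambda>x. Nrec \<rho> x s r"]) (auto simp: stepAB_iff intro: compat_compatc.intros)
lemma AB_nrec2: "stepAB\<^sup>*\<^sup>* t u \<Longrightarrow> stepAB\<^sup>*\<^sup>* (Nrec \<rho> s t r) (Nrec \<rho> s u r)"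
  by (erule rtp_map[where f="\<lambda>x. Nrec \<rho> s x r"]) (auto simp: stepAB_iff intro: compat_compatc.intros)
lemma AB_nrec3: "stepAB\<^sup>*\<^sup>* t u \<Longrightarrow> stepAB\<^sup>*\<^sup>* (Nrec \<rho> s r t) (Nrec \<rho> s r u)"
  by (erule rtp_map[where f="\<lambda>x. Nrec \<rho> s r x"]) (auto simp: stepAB_iff intro: compat_compatc.intros)
lemma AB_mu: "ABc\<^sup>*\<^sup>* c d \<Longrightarrow> stepAB\<^sup>*\<^sup>* (Mu \<rho> c) (Mu \<rho> d)"
  by (erule rtp_map[where f="Mu \<rho>"]) (auto simp: stepAB_iff ABc_def intro: compat_compatc.intros)
lemma ABc_cmd: "stepAB\<^sup>*\<^sup>* t u \<Longrightarrow> ABc\<^sup>*\<^sup>* (Cmd i t) (Cmd i u)"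
  by (erule rtp_map[where f="Cmd i"]) (auto simp: stepAB_iff ABc_def intro: compat_compatc.intros)

lemma compat_fill: "compat R C t u \<Longrightarrow> compat R C (fill E t) (fill E u)"
  by (induct E) (auto intro: compat_compatc.intros)
lemma AB_fill: "stepAB\<^sup>*\<^sup>* t u \<Longrightarrow> stepAB\<^sup>*\<^sup>* (fill E t) (fill E u)"
  by (erule rtp_map[where f="fill E"]) (auto simp: stepAB_iff intro: compat_fill)
lemma AA_fill: "AA\<^sup>*\<^sup>* t u \<Longrightarrow> AA\<^sup>*\<^sup>* (fill E t) (fill E u)"
  by (erule rtp_map[where f="fill E"]) (auto intro: compat_fill)

lemma SS0: "gsubE (ss 0 0 X) (liftME 0 Y) = liftME 0 Y"
proof -
  have "(\<lambda>a. ss 0 0 X (lk 0 a)) = rn (lk 0)" by (rule ext) (simp add: ss_def lk_def rn_def)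
  then show ?thesis by (simp add: liftME_gsub GRaE)
qed
lemma SS0t: "gsub (ss 0 0 X) (liftM 0 Y) = liftM 0 Y"
proof -
  have "(\<lambda>a. ss 0 0 X (lk 0 a)) = rn (lk 0)" by (rule ext) (simp add: ss_def lk_def rn_def)
  then show ?thesis by (simp add: liftM_gsub GRa)
qed

lemma KEY: "gsubc (msig \<sigma>) (gsubc (ss 0 0 E) c) = gsubc (ss 0 0 (gsubE (msig \<sigma>) E)) (gsubc (msig \<sigma>) c)"
proof -
  have "scomp (msig \<sigma>) (ss 0 0 E) = scomp (ss 0 0 (gsubE (msig \<sigma>) E)) (msig \<sigma>)"
    by (rule ext) (simp add: scomp_def ss_def msig_def SS0 split: nat.split)
  then show ?thesis by (simp add: GC)
qed
lemma KEY_rn: "gsubc (rn (upf f)) (gsubc (ss 0 0 E) c) = gsubc (ss 0 0 (gsubE (rn (upf f)) E)) (gsubc (rn (upf f)) c)"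
  using KEY[of "rn f"] by simp

lemma llsig_ss_j[simp]: "llsig j (ss k b E) = ss k b (liftLE j E)"
  by (rule ext) (simp add: llsig_def ss_def)

lemma L1: "AA t u \<Longrightarrow> AA (gsub \<sigma> t) (gsub \<sigma> u)" "AAc c d \<Longrightarrow> AAc (gsubc \<sigma> c) (gsubc \<sigma> d)"
proof (induct t u and c d arbitrary: \<sigma> and \<sigma> rule: compat_compatc.inducts)
  case (root t u)
  then show ?case
  proof cases
    case (beta \<rho> t r) then show ?thesis by (auto simp: SG intro!: compat_compatc.intros rootA.intros)
  next
    case (muS \<rho> c)
    have "rootA (gsub \<sigma> (S (Mu \<rho> c))) (gsub \<sigma> (Mu \<rho> (ssubc 0 0 (CS Hole) c)))"
      using rootA.muS[of \<rho> "gsubc (msig \<sigma>) c"] by (simp add: ssub_gsub KEY)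
    then show ?thesis using muS by (auto intro: compat_compatc.intros)
  next
    case (muApp \<rho> c s)
    have "rootA (gsub \<sigma> (App (Mu \<rho> c) s)) (gsub \<sigma> (Mu \<rho> (ssubc 0 0 (CApp Hole (liftM 0 s)) c)))"
      using rootA.muApp[of \<rho> "gsubc (msig \<sigma>) c" "gsub \<sigma> s"] by (simp add: ssub_gsub KEY MSt)
    then show ?thesis using muApp by (auto intro: compat_compatc.intros)
  next
    case nrec0 then show ?thesis by (auto intro!: compat_compatc.intros rootA.intros)
  next
    case (nrecS \<rho> r s n) then show ?thesis using rootA.nrecS[of \<rho> "gsub \<sigma> r" "gsub \<sigma> s" n]
      by (auto intro: compat_compatc.intros)
  next
    case (muNrec \<rho> r s \<sigma>' c)
    have "rootA (gsub \<sigma> (Nrec \<rho> r s (Mu \<sigma>' c))) (gsub \<sigma> (Mu \<sigma>' (ssubc 0 0 (CNrec \<rho> (liftM 0 r) (liftM 0 s) Hole) c)))"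
      using rootA.muNrec[of \<rho> "gsub \<sigma> r" "gsub \<sigma> s" \<sigma>' "gsubc (msig \<sigma>) c"] by (simp add: ssub_gsub KEY MSt)
    then show ?thesis using muNrec by (auto intro: compat_compatc.intros)
  qed
next
  case (cmd t u i) then show ?case by (auto intro: compat_compatc.intros compat_fill)
qed (auto intro: compat_compatc.intros)

lemma L1L: "AA t u \<Longrightarrow> AA (liftL j t) (liftL j u)" "AAc c d \<Longrightarrow> AAc (liftLc j c) (liftLc j d)"
proof (induct t u and c d arbitrary: j and j rule: compat_compatc.inducts)
  case (root t u)
  have g: "liftLc j (gsubc (ss 0 0 E) c) = gsubc (ss 0 0 (liftLE j E)) (liftLc j c)" for E c
    using GL(2)[of j "ss 0 0 E" c] by simp
  from root show ?case
  proof cases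
    case (beta \<rho> t r) then show ?thesis by (auto simp: LS intro!: compat_compatc.intros rootA.intros)
  next
    case (muS \<rho> c) then show ?thesis
      using rootA.muS[of \<rho> "liftLc j c"] by (auto simp: ssub_gsub g intro: compat_compatc.intros)
  next
    case (muApp \<rho> c s) then show ?thesis
      using rootA.muApp[of \<rho> "liftLc j c" "liftL j s"] by (auto simp: ssub_gsub g liftL_liftM intro: compat_compatc.intros)
  next
    case nrec0 then show ?thesis by (auto intro!: compat_compatc.intros rootA.intros)
  next
    case (nrecS \<rho> r s n) then show ?thesis using rootA.nrecS[of \<rho> "liftL j r" "liftL j s" n]
      by (auto intro: compat_compatc.intros)
  next
    case (muNrec \<rho> r s \<sigma>' c) then show ?thesis
      using rootA.muNrec[of \<rho> "liftL j r" "liftL j s" \<sigma>' "liftLc j c"] by (auto simp: ssub_gsub g liftL_liftM intro: compat_compatc.intros)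
  qed
qed (auto intro: compat_compatc.intros)

definition ga :: "nat \<Rightarrow> nat \<Rightarrow> nat" where "ga a i = (case i of 0 \<Rightarrow> a | Suc j \<Rightarrow> j)"

lemma REN: "lowerMc 0 (ssubc 0 (Suc a) Hole c) = gsubc (rn (ga a)) c"
proof -
  have "ss 0 (Suc a) Hole = rn (\<lambda>i. if i = 0 then Suc a else i)" by (rule ext) (simp add: ss_def rn_def)
  moreover have "(\<lambda>x. lw 0 (if x = 0 then Suc a else x)) = ga a"
    by (rule ext) (simp add: lw_def ga_def split: nat.split)
  ultimately show ?thesis by (simp only: lowerM_gsub ssub_gsub ren_renc)
qed

lemma rename': "rootBc (Cmd a (Mu \<rho> c)) (gsubc (rn (ga a)) c)"
  using rootBc.rename[of a \<rho> c] by (simp add: REN)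
lemma muEta': "rootBt (Mu \<rho> (Cmd 0 (liftM 0 y))) y"
  using rootBt.muEta[of "liftM 0 y" \<rho>] by simp
lemma rootBt_inv: "rootBt t u \<Longrightarrow> \<exists>\<rho>. t = Mu \<rho> (Cmd 0 (liftM 0 u))"
  by (erule rootBt.cases) (auto simp: lift_lower)
lemma rootBc_inv: "rootBc c d \<Longrightarrow> \<exists>a \<rho> c'. c = Cmd a (Mu \<rho> c') \<and> d = gsubc (rn (ga a)) c'"
  by (erule rootBc.cases) (auto simp: REN)

lemma GAL: "gsubE (rn (ga a)) (liftME 0 E) = E"
proof -
  have "(\<lambda>x. ga a (lk 0 x)) = (\<lambda>x. x)" by (rule ext) (simp add: ga_def lk_def)
  then show ?thesis by (simp only: liftME_gsub ren_renE gsubE_id)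
qed
lemma GAt: "gsub (rn (ga a)) (liftM 0 t) = t"
proof -
  have "(\<lambda>x. ga a (lk 0 x)) = (\<lambda>x. x)" by (rule ext) (simp add: ga_def lk_def)
  then show ?thesis by (simp only: liftM_gsub ren_ren gsub_id)
qed
lemma GL_rn: "gsub (rn f) (liftL j r) = liftL j (gsub (rn f) r)"
  "gsubc (rn f) (liftLc j c) = liftLc j (gsubc (rn f) c)"
  using GL[of j "rn f"] by simp_all

lemma BL: "BB t u \<Longrightarrow> BB (liftL j t) (liftL j u)" "BBc c d \<Longrightarrow> BBc (liftLc j c) (liftLc j d)"
proof (induct t u and c d arbitrary: j and j rule: compat_compatc.inducts)
  case (root t u)
  then obtain \<rho> where "t = Mu \<rho> (Cmd 0 (liftM 0 u))" using rootBt_inv by blast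
  then show ?case using muEta'[of \<rho> "liftL j u"] by (auto simp: liftL_liftM intro: compat_compatc.intros)
next
  case (rootc c d)
  then obtain a \<rho> c' where "c = Cmd a (Mu \<rho> c')" "d = gsubc (rn (ga a)) c'" using rootBc_inv by blast
  then show ?case using rename'[of a \<rho> "liftLc j c'"] by (auto simp: GL_rn intro: compat_compatc.intros)
qed (auto intro: compat_compatc.intros)

lemma msig0[simp]: "msig \<sigma> 0 = (0, Hole)" by (simp add: msig_def)
lemma ss00_Hole: "ss 0 0 Hole = rn (\<lambda>i. i)" by (rule ext) (simp add: ss_def rn_def)
lemma SSC: "scomp (ss 0 0 F) (ss 0 0 (liftME 0 E)) = ss 0 0 (cc F (liftME 0 E))"
  by (rule ext) (simp add: scomp_def ss_def SS0)

lemma AA_step: "AA\<^sup>*\<^sup>* a b \<Longrightarrow> rootA b c \<Longrightarrow> AA\<^sup>*\<^sup>* a c"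
  by (auto intro: rtranclp.rtrancl_into_rtrancl compat_compatc.intros)

lemma P: "AA\<^sup>*\<^sup>* (fill E (Mu \<rho> x)) (Mu \<rho> (gsubc (ss 0 0 (liftME 0 E)) x))"
proof (induct E)
  case Hole then show ?case by (simp add: ss00_Hole)
next
  case (CApp E s)
  have 1: "AA\<^sup>*\<^sup>* (App (fill E (Mu \<rho> x)) s) (App (Mu \<rho> (gsubc (ss 0 0 (liftME 0 E)) x)) s)"
    using AA_fill[OF CApp, of "CApp Hole s"] by simp
  have 2: "rootA (App (Mu \<rho> (gsubc (ss 0 0 (liftME 0 E)) x)) s) (Mu \<rho> (gsubc (ss 0 0 (liftME 0 (CApp E s))) x))"
    using rootA.muApp[of \<rho> "gsubc (ss 0 0 (liftME 0 E)) x" s] by (simp add: ssub_gsub GC SSC)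
  show ?case using AA_step[OF 1 2] by simp
next
  case (CS E)
  have 1: "AA\<^sup>*\<^sup>* (S (fill E (Mu \<rho> x))) (S (Mu \<rho> (gsubc (ss 0 0 (liftME 0 E)) x)))"
    using AA_fill[OF CS, of "CS Hole"] by simp
  have 2: "rootA (S (Mu \<rho> (gsubc (ss 0 0 (liftME 0 E)) x))) (Mu \<rho> (gsubc (ss 0 0 (liftME 0 (CS E))) x))"
    using rootA.muS[of \<rho> "gsubc (ss 0 0 (liftME 0 E)) x"] by (simp add: ssub_gsub GC SSC)
  show ?case using AA_step[OF 1 2] by simp
next
  case (CNrec \<rho>' r s E)
  have 1: "AA\<^sup>*\<^sup>* (Nrec \<rho>' r s (fill E (Mu \<rho> x))) (Nrec \<rho>' r s (Mu \<rho> (gsubc (ss 0 0 (liftME 0 E)) x)))"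
    using AA_fill[OF CNrec, of "CNrec \<rho>' r s Hole"] by simp
  have 2: "rootA (Nrec \<rho>' r s (Mu \<rho> (gsubc (ss 0 0 (liftME 0 E)) x))) (Mu \<rho> (gsubc (ss 0 0 (liftME 0 (CNrec \<rho>' r s E))) x))"
    using rootA.muNrec[of \<rho>' r s \<rho> "gsubc (ss 0 0 (liftME 0 E)) x"] by (simp add: ssub_gsub GC SSC)
  show ?case using AA_step[OF 1 2] by simp
qed

lemma EQ: "gsubc (rn (ga (fst (\<sigma> a)))) (gsubc (ss 0 0 (liftME 0 (snd (\<sigma> a)))) (gsubc (msig \<sigma>) c))
   = gsubc \<sigma> (gsubc (rn (ga a)) c)"
proof -
  have "rsig (ga (fst (\<sigma> a))) (scomp (ss 0 0 (liftME 0 (snd (\<sigma> a)))) (msig \<sigma>)) = (\<lambda>i. \<sigma> (ga a i))"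
    by (rule ext) (simp add: rsig_def scomp_def ss_def msig_def SS0 GAL ga_def split: nat.split)
  then show ?thesis
    by (simp only: GC(2)[of "ss 0 0 (liftME 0 (snd (\<sigma> a)))" "msig \<sigma>" c] GRb(2) GRa(2))
qed

lemma LS_B: "BB t u \<Longrightarrow> stepAB\<^sup>*\<^sup>* (gsub \<sigma> t) (gsub \<sigma> u)" "BBc c d \<Longrightarrow> ABc\<^sup>*\<^sup>* (gsubc \<sigma> c) (gsubc \<sigma> d)"
proof (induct t u and c d arbitrary: \<sigma> and \<sigma> rule: compat_compatc.inducts)
  case (root t u)
  then obtain \<rho> where "t = Mu \<rho> (Cmd 0 (liftM 0 u))" using rootBt_inv by blast
  then show ?case using muEta'[of \<rho> "gsub \<sigma> u"] by (auto simp: MSt intro!: AB_B compat_compatc.intros)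
next
  case (rootc c d)
  then obtain a \<rho> c' where cd: "c = Cmd a (Mu \<rho> c')" "d = gsubc (rn (ga a)) c'" using rootBc_inv by blast
  let ?X = "gsubc (msig \<sigma>) c'"
  let ?E = "snd (\<sigma> a)"
  have 1: "ABc\<^sup>*\<^sup>* (Cmd (fst (\<sigma> a)) (fill ?E (Mu \<rho> ?X))) (Cmd (fst (\<sigma> a)) (Mu \<rho> (gsubc (ss 0 0 (liftME 0 ?E)) ?X)))"
    by (rule ABc_cmd, rule AB_AA, rule P)
  have 2: "BBc (Cmd (fst (\<sigma> a)) (Mu \<rho> (gsubc (ss 0 0 (liftME 0 ?E)) ?X))) (gsubc \<sigma> d)"
    using rename'[of "fst (\<sigma> a)" \<rho> "gsubc (ss 0 0 (liftME 0 ?E)) ?X"] cd by (simp add: EQ compat_compatc.rootc)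
  show ?case using 1 2 cd by (auto intro: rtranclp_trans ABc_B)
next
  case (lam t u \<rho>) then show ?case by (simp add: AB_lam)
next
  case (appL t u s) then show ?case by (simp add: AB_appL)
next
  case (appR t u s) then show ?case by (simp add: AB_appR)
next
  case (mu c d \<rho>) then show ?case by (simp add: AB_mu)
next
  case (suc t u) then show ?case by (simp add: AB_S)
next
  case (nrec1 t u \<rho> s r) then show ?case by (simp add: AB_nrec1)
next
  case (nrec2 t u \<rho> s r) then show ?case by (simp add: AB_nrec2)
next
  case (nrec3 t u \<rho> s r) then show ?case by (simp add: AB_nrec3)
next
  case (cmd t u i) then show ?case by (simp add: ABc_cmd AB_fill)
qed

lemma ABG: "stepAB\<^sup>*\<^sup>* t u \<Longrightarrow> stepAB\<^sup>*\<^sup>* (gsub \<sigma> t) (gsub \<sigma> u)"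
  by (erule rtp_map2[where f="gsub \<sigma>"]) (auto simp: stepAB_iff intro: AB_A L1 LS_B)
lemma ABL: "stepAB\<^sup>*\<^sup>* t u \<Longrightarrow> stepAB\<^sup>*\<^sup>* (liftL j t) (liftL j u)"
  by (erule rtp_map[where f="liftL j"]) (auto simp: stepAB_iff intro: L1L BL)

lemma LMS: "liftM 0 (subst k s u) = subst k (liftM 0 s) (liftM 0 u)"
  by (simp only: liftM_gsub SG_rn)

lemma L3: "BB t u \<Longrightarrow> BB (subst k s t) (subst k s u)" "BBc c d \<Longrightarrow> BBc (substc k s c) (substc k s d)"
proof (induct t u and c d arbitrary: k s and k s rule: compat_compatc.inducts)
  case (root t u)
  then obtain \<rho> where "t = Mu \<rho> (Cmd 0 (liftM 0 u))" using rootBt_inv by blast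
  then show ?case using muEta'[of \<rho> "subst k s u"] by (auto simp: LMS intro: compat_compatc.intros)
next
  case (rootc c d)
  then obtain a \<rho> c' where "c = Cmd a (Mu \<rho> c')" "d = gsubc (rn (ga a)) c'" using rootBc_inv by blast
  then show ?case using rename'[of a \<rho> "substc k (liftM 0 s) c'"] by (auto simp: SG_rn GAt intro: compat_compatc.intros)
qed (auto intro: compat_compatc.intros)

lemma AB_app2: "stepAB\<^sup>*\<^sup>* a a' \<Longrightarrow> stepAB\<^sup>*\<^sup>* b b' \<Longrightarrow> stepAB\<^sup>*\<^sup>* (App a b) (App a' b')"
  by (meson AB_appL AB_appR rtranclp_trans)
lemma AB_nrec: "stepAB\<^sup>*\<^sup>* a a' \<Longrightarrow> stepAB\<^sup>*\<^sup>* b b' \<Longrightarrow> stepAB\<^sup>*\<^sup>* c c' \<Longrightarrow> stepAB\<^sup>*\<^sup>* (Nrec \<rho> a b c) (Nrec \<rho> a' b' c')"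
  by (meson AB_nrec1 AB_nrec2 AB_nrec3 rtranclp_trans)

lemma L4: "stepAB\<^sup>*\<^sup>* x x' \<Longrightarrow> stepAB\<^sup>*\<^sup>* (subst k x u) (subst k x' u)"
  "stepAB\<^sup>*\<^sup>* x x' \<Longrightarrow> ABc\<^sup>*\<^sup>* (substc k x c) (substc k x' c)"
proof (induct u and c arbitrary: k x x' and k x x')
  case (Lam \<rho> t) then show ?case by (simp add: AB_lam ABL)
next
  case (Mu \<rho> c) then show ?case by (simp add: AB_mu ABG liftM_gsub)
next
  case (App a b) then show ?case by (simp add: AB_app2)
next
  case (Nrec \<rho> a b c) then show ?case by (simp add: AB_nrec)
next
  case (S a) then show ?case by (simp add: AB_S)
next
  case (Cmd i t) then show ?case by (simp add: ABc_cmd)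
qed auto

inductive ctxR :: "ctx \<Rightarrow> ctx \<Rightarrow> bool" where
  "ctxR Hole Hole"
| "ctxR E E' \<Longrightarrow> stepAB\<^sup>*\<^sup>* t t' \<Longrightarrow> ctxR (CApp E t) (CApp E' t')"
| "ctxR E E' \<Longrightarrow> ctxR (CS E) (CS E')"
| "ctxR E E' \<Longrightarrow> stepAB\<^sup>*\<^sup>* r r' \<Longrightarrow> stepAB\<^sup>*\<^sup>* s s' \<Longrightarrow> ctxR (CNrec \<rho> r s E) (CNrec \<rho> r' s' E')"

lemma CR1: "ctxR E E' \<Longrightarrow> stepAB\<^sup>*\<^sup>* (fill E x) (fill E' x)"
  by (induct rule: ctxR.induct) (auto intro: AB_app2 AB_S AB_nrec)
lemma CR_refl: "ctxR E E"
  by (induct E) (auto intro: ctxR.intros)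
lemma CR_L: "ctxR E E' \<Longrightarrow> ctxR (liftLE j E) (liftLE j E')"
  by (induct rule: ctxR.induct) (auto intro: ctxR.intros ABL)
lemma CR_G: "ctxR E E' \<Longrightarrow> ctxR (gsubE \<sigma> E) (gsubE \<sigma> E')"
  by (induct rule: ctxR.induct) (auto intro: ctxR.intros ABG)

lemma CRS: "\<forall>i. fst (\<sigma> i) = fst (\<sigma>' i) \<and> ctxR (snd (\<sigma> i)) (snd (\<sigma>' i)) \<Longrightarrow> stepAB\<^sup>*\<^sup>* (gsub \<sigma> t) (gsub \<sigma>' t)"
  "\<forall>i. fst (\<sigma> i) = fst (\<sigma>' i) \<and> ctxR (snd (\<sigma> i)) (snd (\<sigma>' i)) \<Longrightarrow> ABc\<^sup>*\<^sup>* (gsubc \<sigma> c) (gsubc \<sigma>' c)"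
proof (induct t and c arbitrary: \<sigma> \<sigma>' and \<sigma> \<sigma>')
  case (Lam \<rho> t)
  have "\<forall>i. fst (llsig 0 \<sigma> i) = fst (llsig 0 \<sigma>' i) \<and> ctxR (snd (llsig 0 \<sigma> i)) (snd (llsig 0 \<sigma>' i))"
    using Lam.prems by (auto intro: CR_L)
  with Lam show ?case by (simp add: AB_lam)
next
  case (Mu \<rho> c)
  have "\<forall>i. fst (msig \<sigma> i) = fst (msig \<sigma>' i) \<and> ctxR (snd (msig \<sigma> i)) (snd (msig \<sigma>' i))"
    using Mu.prems by (auto simp: msig_def liftME_gsub intro: CR_G ctxR.intros split: nat.split)
  with Mu show ?case by (simp add: AB_mu)
next
  case (App a b) then show ?case by (simp add: AB_app2)
next
  case (Nrec \<rho> a b c) then show ?case by (simp add: AB_nrec)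
next
  case (S a) then show ?case by (simp add: AB_S)
next
  case (Cmd i t)
  have "stepAB\<^sup>*\<^sup>* (fill (snd (\<sigma> i)) (gsub \<sigma> t)) (fill (snd (\<sigma>' i)) (gsub \<sigma>' t))"
    using Cmd by (meson AB_fill CR1 rtranclp_trans)
  then show ?case using Cmd.prems by (simp add: ABc_cmd)
qed auto

lemma CRss: "ctxR E E' \<Longrightarrow> ABc\<^sup>*\<^sup>* (ssubc 0 0 E c) (ssubc 0 0 E' c)"
  unfolding ssub_gsub by (rule CRS) (auto simp: ss_def intro: ctxR.intros)

lemma ssub_num[simp]: "ssub k b E (num n) = num n"
  by (simp add: ssub_gsub)

lemma N: "BB y (num n) \<Longrightarrow> (\<exists>\<rho>. y = Mu \<rho> (Cmd 0 (num n))) \<or> (\<exists>y'. AA y y' \<and> stepAB\<^sup>*\<^sup>* y' (num n))"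
proof (induct n arbitrary: y)
  case 0
  then show ?case by (cases rule: compat.cases) (auto dest: rootBt_inv)
next
  case (Suc n)
  from Suc.prems show ?case
  proof (cases rule: compat.cases)
    case root then show ?thesis by (auto dest!: rootBt_inv)
  next
    case (suc y0 u0)
    then have "BB y0 (num n)" by simp
    from Suc.hyps[OF this] show ?thesis
    proof
      assume "\<exists>\<rho>. y0 = Mu \<rho> (Cmd 0 (num n))"
      then obtain \<rho> where y0: "y0 = Mu \<rho> (Cmd 0 (num n))" by blast
      have "AA (S y0) (Mu \<rho> (Cmd 0 (S (num n))))"
        using rootA.muS[of \<rho> "Cmd 0 (num n)"] y0 by (auto intro: compat_compatc.intros)
      moreover have "stepAB\<^sup>*\<^sup>* (Mu \<rho> (Cmd 0 (S (num n)))) (num (Suc n))"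
        using muEta'[of \<rho> "S (num n)"] by (auto intro: AB_B compat_compatc.intros)
      ultimately show ?thesis using suc by auto
    next
      assume "\<exists>y'. AA y0 y' \<and> stepAB\<^sup>*\<^sup>* y' (num n)"
      then obtain y' where "AA y0 y'" "stepAB\<^sup>*\<^sup>* y' (num n)" by blast
      then show ?thesis using suc by (auto intro: compat_compatc.intros AB_S)
    qed
  qed auto
qed

lemma gi_Lam: "gsub (rn f) t = Lam \<rho> a \<longleftrightarrow> (\<exists>t0. t = Lam \<rho> t0 \<and> a = gsub (rn f) t0)"
  by (cases t) auto
lemma gi_App: "gsub (rn f) t = App a b \<longleftrightarrow> (\<exists>a0 b0. t = App a0 b0 \<and> a = gsub (rn f) a0 \<and> b = gsub (rn f) b0)"
  by (cases t) auto
lemma gi_Mu: "gsub (rn f) t = Mu \<rho> c \<longleftrightarrow> (\<exists>c0. t = Mu \<rho> c0 \<and> c = gsubc (rn (upf f)) c0)"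
  by (cases t) auto
lemma gi_S: "gsub (rn f) t = S a \<longleftrightarrow> (\<exists>a0. t = S a0 \<and> a = gsub (rn f) a0)"
  by (cases t) auto
lemma gi_Zero: "gsub (rn f) t = Zero \<longleftrightarrow> t = Zero"
  by (cases t) auto
lemma gi_Nrec: "gsub (rn f) t = Nrec \<rho> a b c \<longleftrightarrow> (\<exists>a0 b0 c0. t = Nrec \<rho> a0 b0 c0 \<and> a = gsub (rn f) a0 \<and> b = gsub (rn f) b0 \<and> c = gsub (rn f) c0)"
  by (cases t) auto
lemma gi_Cmd: "gsubc (rn f) c = Cmd i a \<longleftrightarrow> (\<exists>j t0. c = Cmd j t0 \<and> i = f j \<and> a = gsub (rn f) t0)"
  by (cases c) auto

lemmas gi_Lam' = gi_Lam[unfolded eq_commute[of "gsub (rn f) t" for f t]]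
lemmas gi_App' = gi_App[unfolded eq_commute[of "gsub (rn f) t" for f t]]
lemmas gi_Mu' = gi_Mu[unfolded eq_commute[of "gsub (rn f) t" for f t]]
lemmas gi_S' = gi_S[unfolded eq_commute[of "gsub (rn f) t" for f t]]
lemmas gi_Zero' = gi_Zero[unfolded eq_commute[of "gsub (rn f) t" for f t]]
lemmas gi_Nrec' = gi_Nrec[unfolded eq_commute[of "gsub (rn f) t" for f t]]

lemma MSt_rn: "gsub (rn (upf f)) (liftM 0 t) = liftM 0 (gsub (rn f) t)"
  using MSt[of "rn f" t] by simp

lemma RFroot: "rootA (gsub (rn f) t) v \<Longrightarrow> \<exists>t'. rootA t t' \<and> v = gsub (rn f) t'"
proof (erule rootA.cases)
  fix \<rho> w r assume h: "gsub (rn f) t = App (Lam \<rho> w) r" "v = subst 0 r w"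
  then obtain w0 r0 where "t = App (Lam \<rho> w0) r0" "w = gsub (rn f) w0" "r = gsub (rn f) r0"
    by (auto simp: gi_App gi_Lam gi_App' gi_Lam')
  then show ?thesis using h by (auto simp: SG_rn intro: rootA.intros)
next
  fix \<rho> c assume h: "gsub (rn f) t = S (Mu \<rho> c)" "v = Mu \<rho> (ssubc 0 0 (CS Hole) c)"
  then obtain c0 where "t = S (Mu \<rho> c0)" "c = gsubc (rn (upf f)) c0" by (auto simp: gi_S gi_Mu gi_S' gi_Mu')
  then show ?thesis using h rootA.muS[of \<rho> c0] by (auto simp: ssub_gsub KEY_rn)
next
  fix \<rho> c s assume h: "gsub (rn f) t = App (Mu \<rho> c) s" "v = Mu \<rho> (ssubc 0 0 (CApp Hole (liftM 0 s)) c)"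
  then obtain c0 s0 where "t = App (Mu \<rho> c0) s0" "c = gsubc (rn (upf f)) c0" "s = gsub (rn f) s0"
    by (auto simp: gi_App gi_Mu gi_App' gi_Mu')
  then show ?thesis using h rootA.muApp[of \<rho> c0 s0] by (auto simp: ssub_gsub KEY_rn MSt_rn)
next
  fix \<rho> r s assume h: "gsub (rn f) t = Nrec \<rho> r s Zero" "v = r"
  then obtain r0 s0 where "t = Nrec \<rho> r0 s0 Zero" "r = gsub (rn f) r0" by (auto simp: gi_Nrec gi_Zero gi_Nrec' gi_Zero')
  then show ?thesis using h by (auto intro: rootA.intros)
next
  fix \<rho> r s n assume h: "gsub (rn f) t = Nrec \<rho> r s (S (num n))"
    "v = App (App s (num n)) (Nrec \<rho> r s (num n))"
  then obtain r0 s0 c0 where t: "t = Nrec \<rho> r0 s0 c0" "r = gsub (rn f) r0" "s = gsub (rn f) s0"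
    "gsub (rn f) c0 = num (Suc n)" by (auto simp: gi_Nrec gi_Nrec')
  then have "c0 = num (Suc n)" using gsub_rn_num by blast
  then show ?thesis using h t rootA.nrecS[of \<rho> r0 s0 n] by auto
next
  fix \<rho> r s \<sigma> c assume h: "gsub (rn f) t = Nrec \<rho> r s (Mu \<sigma> c)"
    "v = Mu \<sigma> (ssubc 0 0 (CNrec \<rho> (liftM 0 r) (liftM 0 s) Hole) c)"
  then obtain r0 s0 c0 where "t = Nrec \<rho> r0 s0 (Mu \<sigma> c0)" "r = gsub (rn f) r0" "s = gsub (rn f) s0"
    "c = gsubc (rn (upf f)) c0"
    by (auto simp: gi_Nrec gi_Mu gi_Nrec' gi_Mu')
  then show ?thesis using h rootA.muNrec[of \<rho> r0 s0 \<sigma> c0] by (auto simp: ssub_gsub KEY_rn MSt_rn)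
qed

lemma RF: "AA x v \<Longrightarrow> x = gsub (rn f) t \<Longrightarrow> \<exists>t'. AA t t' \<and> v = gsub (rn f) t'"
  "AAc y w \<Longrightarrow> y = gsubc (rn f) c \<Longrightarrow> \<exists>c'. AAc c c' \<and> w = gsubc (rn f) c'"
proof (induct x v and y w arbitrary: f t and f c rule: compat_compatc.inducts)
  case (root x v)
  then show ?case using RFroot[of f t v] by (auto intro: compat_compatc.intros)
next
  case (lam a b \<rho>)
  then obtain t0 where "t = Lam \<rho> t0" "a = gsub (rn f) t0" by (metis gi_Lam)
  with lam show ?case by (fastforce intro: compat_compatc.intros)
next
  case (appL a b s)
  then obtain a0 b0 where "t = App a0 b0" "a = gsub (rn f) a0" "s = gsub (rn f) b0" by (metis gi_App)
  with appL show ?case by (fastforce intro: compat_compatc.intros)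
next
  case (appR a b s)
  then obtain a0 b0 where "t = App b0 a0" "a = gsub (rn f) a0" "s = gsub (rn f) b0" by (metis gi_App)
  with appR show ?case by (fastforce intro: compat_compatc.intros)
next
  case (mu c d \<rho>)
  then obtain c0 where "t = Mu \<rho> c0" "c = gsubc (rn (upf f)) c0" by (metis gi_Mu)
  with mu show ?case by (fastforce intro: compat_compatc.intros)
next
  case (suc a b)
  then obtain a0 where "t = S a0" "a = gsub (rn f) a0" by (metis gi_S)
  with suc show ?case by (fastforce intro: compat_compatc.intros)
next
  case (nrec1 a b \<rho> s r)
  then obtain a0 s0 r0 where "t = Nrec \<rho> a0 s0 r0" "a = gsub (rn f) a0" "s = gsub (rn f) s0" "r = gsub (rn f) r0"
    by (metis gi_Nrec)
  with nrec1 show ?case by (fastforce intro: compat_compatc.intros)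
next
  case (nrec2 a b \<rho> s r)
  then obtain a0 s0 r0 where "t = Nrec \<rho> s0 a0 r0" "a = gsub (rn f) a0" "s = gsub (rn f) s0" "r = gsub (rn f) r0"
    by (metis gi_Nrec)
  with nrec2 show ?case by (fastforce intro: compat_compatc.intros)
next
  case (nrec3 a b \<rho> s r)
  then obtain a0 s0 r0 where "t = Nrec \<rho> s0 r0 a0" "a = gsub (rn f) a0" "s = gsub (rn f) s0" "r = gsub (rn f) r0"
    by (metis gi_Nrec)
  with nrec3 show ?case by (fastforce intro: compat_compatc.intros)
next
  case (rootc c d) then show ?case by simp
next
  case (cmd a b i)
  then obtain j t0 where "c = Cmd j t0" "i = f j" "a = gsub (rn f) t0" by (metis gi_Cmd)
  with cmd show ?case by (fastforce intro: compat_compatc.intros)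
qed

lemma AAinv_Lam: "AA (Lam \<rho> u) v \<Longrightarrow> \<exists>u'. v = Lam \<rho> u' \<and> AA u u'"
  by (erule compat.cases) (auto elim: rootA.cases)
lemma AAinv_Mu: "AA (Mu \<rho> c) v \<Longrightarrow> \<exists>d. v = Mu \<rho> d \<and> AAc c d"
  by (erule compat.cases) (auto elim: rootA.cases)
lemma AAcinv: "AAc (Cmd i u) v \<Longrightarrow> \<exists>u'. v = Cmd i u' \<and> AA u u'"
  by (erule compatc.cases) auto
lemma AAinv_App: "AA (App a b) v \<Longrightarrow> (\<exists>a'. v = App a' b \<and> AA a a') \<or> (\<exists>b'. v = App a b' \<and> AA b b') \<or> rootA (App a b) v"
  by (erule compat.cases) auto
lemma AAinv_S: "AA (S a) v \<Longrightarrow> (\<exists>a'. v = S a' \<and> AA a a') \<or> rootA (S a) v"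
  by (erule compat.cases) auto
lemma AAinv_Nrec: "AA (Nrec \<rho> a b c) v \<Longrightarrow> (\<exists>a'. v = Nrec \<rho> a' b c \<and> AA a a') \<or> (\<exists>b'. v = Nrec \<rho> a b' c \<and> AA b b')
   \<or> (\<exists>c'. v = Nrec \<rho> a b c' \<and> AA c c') \<or> rootA (Nrec \<rho> a b c) v"
  by (erule compat.cases) auto

lemma BBinv_Lam: "BB t (Lam \<rho> w) \<Longrightarrow> \<not> rootBt t (Lam \<rho> w) \<Longrightarrow> \<exists>w0. t = Lam \<rho> w0 \<and> BB w0 w"
  by (erule compat.cases) auto
lemma BBinv_Mu: "BB t (Mu \<rho> c) \<Longrightarrow> \<not> rootBt t (Mu \<rho> c) \<Longrightarrow> \<exists>c0. t = Mu \<rho> c0 \<and> BBc c0 c"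
  by (erule compat.cases) auto
lemma BBinv_S: "BB t (S w) \<Longrightarrow> \<not> rootBt t (S w) \<Longrightarrow> \<exists>w0. t = S w0 \<and> BB w0 w"
  by (erule compat.cases) auto
lemma BBinv_Zero: "BB t Zero \<Longrightarrow> \<not> rootBt t Zero \<Longrightarrow> False"
  by (erule compat.cases) auto

lemma ssub00_lift: "ssub 0 0 E (liftM 0 u) = liftM 0 u"
  by (simp add: ssub_gsub SS0t)

lemma CR_app: "AA (App (Mu \<sigma> (Cmd 0 (liftM 0 u))) s) (Mu \<sigma> (Cmd 0 (liftM 0 (App u s))))"
  using rootA.muApp[of \<sigma> "Cmd 0 (liftM 0 u)" s] by (simp add: ssub00_lift compat_compatc.root)
lemma CR_S: "AA (S (Mu \<sigma> (Cmd 0 (liftM 0 u)))) (Mu \<sigma> (Cmd 0 (liftM 0 (S u))))"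
  using rootA.muS[of \<sigma> "Cmd 0 (liftM 0 u)"] by (simp add: ssub00_lift compat_compatc.root)
lemma CR_nrec: "AA (Nrec \<rho> r s (Mu \<sigma> (Cmd 0 (liftM 0 u)))) (Mu \<sigma> (Cmd 0 (liftM 0 (Nrec \<rho> r s u))))"
  using rootA.muNrec[of \<rho> r s \<sigma> "Cmd 0 (liftM 0 u)"] by (simp add: ssub00_lift compat_compatc.root)

lemma CRgen: "AA t1 (Mu \<sigma> (Cmd 0 (liftM 0 t2))) \<Longrightarrow> AA t2 t3 \<Longrightarrow> \<exists>t4. AA t1 t4 \<and> stepAB\<^sup>*\<^sup>* t4 t3"
proof -
  assume 1: "AA t1 (Mu \<sigma> (Cmd 0 (liftM 0 t2)))" and 2: "AA t2 t3"
  have "AA (liftM 0 t2) (liftM 0 t3)" using L1(1)[OF 2] by (simp add: liftM_gsub)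
  then have a: "AA (Mu \<sigma> (Cmd 0 (liftM 0 t2))) (Mu \<sigma> (Cmd 0 (liftM 0 t3)))"
    by (auto intro: compat_compatc.intros)
  have b: "BB (Mu \<sigma> (Cmd 0 (liftM 0 t3))) t3" by (rule compat_compatc.root, rule muEta')
  have "stepAB\<^sup>*\<^sup>* (Mu \<sigma> (Cmd 0 (liftM 0 t2))) t3" by (rule rtranclp_trans[OF AB_A[OF a] AB_B[OF b]])
  then show ?thesis using 1 by blast
qed

lemma BLM: "BB t u \<Longrightarrow> stepAB\<^sup>*\<^sup>* (liftM 0 t) (liftM 0 u)"
  using ABG[OF AB_B] by (simp add: liftM_gsub)

lemma ex4: "AA t1 x \<Longrightarrow> stepAB\<^sup>*\<^sup>* x t3 \<Longrightarrow> \<exists>t4. AA t1 t4 \<and> stepAB\<^sup>*\<^sup>* t4 t3" by blast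

lemma M: "BB t1 t2 \<Longrightarrow> (\<forall>t3. AA t2 t3 \<longrightarrow> (\<exists>t4. AA t1 t4 \<and> stepAB\<^sup>*\<^sup>* t4 t3))"
  "BBc c1 c2 \<Longrightarrow> (\<forall>c3. AAc c2 c3 \<longrightarrow> (\<exists>c4. AAc c1 c4 \<and> ABc\<^sup>*\<^sup>* c4 c3))"
proof (induct t1 t2 and c1 c2 rule: compat_compatc.inducts)
  case (root t u)
  then obtain \<rho> where t: "t = Mu \<rho> (Cmd 0 (liftM 0 u))" using rootBt_inv by blast
  show ?case
  proof (intro allI impI)
    fix t3 assume "AA u t3"
    then have "AA (liftM 0 u) (liftM 0 t3)" using L1(1) by (simp add: liftM_gsub)
    then have "AA t (Mu \<rho> (Cmd 0 (liftM 0 t3)))" using t by (auto intro: compat_compatc.intros)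
    moreover have "BB (Mu \<rho> (Cmd 0 (liftM 0 t3))) t3" by (rule compat_compatc.root, rule muEta')
    ultimately show "\<exists>t4. AA t t4 \<and> stepAB\<^sup>*\<^sup>* t4 t3" using AB_B by blast
  qed
next
  case (lam t u \<rho>)
  show ?case
  proof (intro allI impI)
    fix t3 assume "AA (Lam \<rho> u) t3"
    then obtain u' where "t3 = Lam \<rho> u'" "AA u u'" using AAinv_Lam by blast
    with lam obtain t4 where "AA t t4" "stepAB\<^sup>*\<^sup>* t4 u'" by blast
    then show "\<exists>t4. AA (Lam \<rho> t) t4 \<and> stepAB\<^sup>*\<^sup>* t4 t3" using \<open>t3 = _\<close>
      by (blast intro: compat_compatc.intros AB_lam)
  qed
next
  case (appL t u s)
  show ?case
  proof (intro allI impI)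
    fix t3 assume A: "AA (App u s) t3"
    show "\<exists>t4. AA (App t s) t4 \<and> stepAB\<^sup>*\<^sup>* t4 t3"
    proof (cases "rootBt t u")
      case True
      then obtain \<sigma> where "t = Mu \<sigma> (Cmd 0 (liftM 0 u))" using rootBt_inv by blast
      then show ?thesis using CRgen[OF CR_app A] by simp
    next
      case nr: False
      from AAinv_App[OF A] consider (l) u' where "t3 = App u' s" "AA u u'"
        | (r) s' where "t3 = App u s'" "AA s s'" | (rt) "rootA (App u s) t3" by blast
      then show ?thesis
      proof cases
        case l
        with appL obtain t4 where "AA t t4" "stepAB\<^sup>*\<^sup>* t4 u'" by blast
        then show ?thesis using l by (blast intro: compat_compatc.intros AB_appL)
      next
        case r
        have "AA (App t s) (App t s')" using r by (auto intro: compat_compatc.intros)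
        moreover have "stepAB\<^sup>*\<^sup>* (App t s') t3" using r appL by (auto intro: AB_B compat_compatc.intros)
        ultimately show ?thesis by blast
      next
        case rt
        then show ?thesis
        proof (cases rule: rootA.cases)
          case (beta \<rho> w)
          then obtain w0 where w0: "t = Lam \<rho> w0" "BB w0 w" using BBinv_Lam appL nr by blast
          have "AA (App t s) (subst 0 s w0)" using w0 by (auto intro: compat_compatc.intros rootA.intros)
          moreover have "stepAB\<^sup>*\<^sup>* (subst 0 s w0) t3" using beta w0 L3(1) by (auto intro: AB_B)
          ultimately show ?thesis by blast
        next
          case (muApp \<rho> c)
          then obtain c0 where c0: "t = Mu \<rho> c0" "BBc c0 c" using BBinv_Mu appL nr by blast
          have "AA (App t s) (Mu \<rho> (ssubc 0 0 (CApp Hole (liftM 0 s)) c0))"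
            using c0 by (auto intro: compat_compatc.intros rootA.intros)
          moreover have "stepAB\<^sup>*\<^sup>* (Mu \<rho> (ssubc 0 0 (CApp Hole (liftM 0 s)) c0)) t3"
            using muApp c0 LS_B(2) by (auto simp: ssub_gsub intro: AB_mu)
          ultimately show ?thesis by blast
        qed
      qed
    qed
  qed
next
  case (appR t u s)
  show ?case
  proof (intro allI impI)
    fix t3 assume A: "AA (App s u) t3"
    from AAinv_App[OF A] consider (l) s' where "t3 = App s' u" "AA s s'"
      | (r) u' where "t3 = App s u'" "AA u u'" | (rt) "rootA (App s u) t3" by blast
    then show "\<exists>t4. AA (App s t) t4 \<and> stepAB\<^sup>*\<^sup>* t4 t3"
    proof cases
      case l
      have "AA (App s t) (App s' t)" using l by (auto intro: compat_compatc.intros)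
      moreover have "stepAB\<^sup>*\<^sup>* (App s' t) t3" using l appR by (auto intro: AB_B compat_compatc.intros)
      ultimately show ?thesis by blast
    next
      case r
      with appR obtain t4 where "AA t t4" "stepAB\<^sup>*\<^sup>* t4 u'" by blast
      then show ?thesis using r by (blast intro: compat_compatc.intros AB_appR)
    next
      case rt
      then show ?thesis
      proof (cases rule: rootA.cases)
        case (beta \<rho> w)
        have "AA (App s t) (subst 0 t w)" using beta by (auto intro: compat_compatc.intros rootA.intros)
        moreover have "stepAB\<^sup>*\<^sup>* (subst 0 t w) t3" using beta appR by (auto intro: L4 AB_B)
        ultimately show ?thesis by blast
      next
        case (muApp \<rho> c)
        have "AA (App s t) (Mu \<rho> (ssubc 0 0 (CApp Hole (liftM 0 t)) c))"
          using muApp by (auto intro: compat_compatc.intros rootA.intros)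
        moreover have "ctxR (CApp Hole (liftM 0 t)) (CApp Hole (liftM 0 u))"
          using appR by (auto intro!: ctxR.intros intro: BLM)
        then have "stepAB\<^sup>*\<^sup>* (Mu \<rho> (ssubc 0 0 (CApp Hole (liftM 0 t)) c)) t3"
          using muApp by (auto intro: AB_mu CRss)
        ultimately show ?thesis by blast
      qed
    qed
  qed
next
  case (mu c d \<rho>)
  show ?case
  proof (intro allI impI)
    fix t3 assume "AA (Mu \<rho> d) t3"
    then obtain d' where "t3 = Mu \<rho> d'" "AAc d d'" using AAinv_Mu by blast
    with mu obtain c4 where "AAc c c4" "ABc\<^sup>*\<^sup>* c4 d'" by blast
    then show "\<exists>t4. AA (Mu \<rho> c) t4 \<and> stepAB\<^sup>*\<^sup>* t4 t3" using \<open>t3 = _\<close>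
      by (blast intro: compat_compatc.intros AB_mu)
  qed
next
  case (suc t u)
  show ?case
  proof (intro allI impI)
    fix t3 assume A: "AA (S u) t3"
    show "\<exists>t4. AA (S t) t4 \<and> stepAB\<^sup>*\<^sup>* t4 t3"
    proof (cases "rootBt t u")
      case True
      then obtain \<sigma> where "t = Mu \<sigma> (Cmd 0 (liftM 0 u))" using rootBt_inv by blast
      then show ?thesis using CRgen[OF CR_S A] by simp
    next
      case nr: False
      from AAinv_S[OF A] consider (l) u' where "t3 = S u'" "AA u u'" | (rt) "rootA (S u) t3" by blast
      then show ?thesis
      proof cases
        case l
        with suc obtain t4 where "AA t t4" "stepAB\<^sup>*\<^sup>* t4 u'" by blast
        then show ?thesis using l by (blast intro: compat_compatc.intros AB_S)
      next
        case rt
        then show ?thesis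
        proof (cases rule: rootA.cases)
          case (muS \<rho> c)
          then obtain c0 where c0: "t = Mu \<rho> c0" "BBc c0 c" using BBinv_Mu suc nr by blast
          have "AA (S t) (Mu \<rho> (ssubc 0 0 (CS Hole) c0))"
            using c0 by (auto intro: compat_compatc.intros rootA.intros)
          moreover have "stepAB\<^sup>*\<^sup>* (Mu \<rho> (ssubc 0 0 (CS Hole) c0)) t3"
            using muS c0 LS_B(2) by (auto simp: ssub_gsub intro: AB_mu)
          ultimately show ?thesis by blast
        qed
      qed
    qed
  qed
next
  case (nrec1 t u \<rho> s r)
  show ?case
  proof (intro allI impI)
    fix t3 assume A: "AA (Nrec \<rho> u s r) t3"
    from AAinv_Nrec[OF A] consider (c1) u' where "t3 = Nrec \<rho> u' s r" "AA u u'"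
      | (c2) s' where "t3 = Nrec \<rho> u s' r" "AA s s'"
      | (c3) r' where "t3 = Nrec \<rho> u s r'" "AA r r'" | (rt) "rootA (Nrec \<rho> u s r) t3" by blast
    then show "\<exists>t4. AA (Nrec \<rho> t s r) t4 \<and> stepAB\<^sup>*\<^sup>* t4 t3"
    proof cases
      case c1
      with nrec1 obtain t4 where "AA t t4" "stepAB\<^sup>*\<^sup>* t4 u'" by blast
      then show ?thesis using c1 by (blast intro: compat_compatc.intros AB_nrec1)
    next
      case c2
      show ?thesis using c2 nrec1 by (intro ex4[of _ "Nrec \<rho> t s' r"]) (auto intro: compat_compatc.intros AB_B)
    next
      case c3
      show ?thesis using c3 nrec1 by (intro ex4[of _ "Nrec \<rho> t s r'"]) (auto intro: compat_compatc.intros AB_B)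
    next
      case rt
      then show ?thesis
      proof (cases rule: rootA.cases)
        case nrec0
        then show ?thesis using nrec1 by (intro ex4[of _ t]) (auto intro: compat_compatc.intros rootA.intros AB_B)
      next
        case (nrecS n)
        then show ?thesis using nrec1
          by (intro ex4[of _ "App (App s (num n)) (Nrec \<rho> t s (num n))"])
            (auto intro: compat_compatc.intros rootA.intros AB_B)
      next
        case (muNrec \<sigma> c)
        have "ctxR (CNrec \<rho> (liftM 0 t) (liftM 0 s) Hole) (CNrec \<rho> (liftM 0 u) (liftM 0 s) Hole)"
          using nrec1 by (auto intro!: ctxR.intros intro: BLM)
        then show ?thesis using muNrec
          by (intro ex4[of _ "Mu \<sigma> (ssubc 0 0 (CNrec \<rho> (liftM 0 t) (liftM 0 s) Hole) c)"])
            (auto intro: compat_compatc.intros rootA.intros AB_mu CRss)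
      qed
    qed
  qed
next
  case (nrec2 t u \<rho> s r)
  show ?case
  proof (intro allI impI)
    fix t3 assume A: "AA (Nrec \<rho> s u r) t3"
    from AAinv_Nrec[OF A] consider (c1) s' where "t3 = Nrec \<rho> s' u r" "AA s s'"
      | (c2) u' where "t3 = Nrec \<rho> s u' r" "AA u u'"
      | (c3) r' where "t3 = Nrec \<rho> s u r'" "AA r r'" | (rt) "rootA (Nrec \<rho> s u r) t3" by blast
    then show "\<exists>t4. AA (Nrec \<rho> s t r) t4 \<and> stepAB\<^sup>*\<^sup>* t4 t3"
    proof cases
      case c2
      with nrec2 obtain t4 where "AA t t4" "stepAB\<^sup>*\<^sup>* t4 u'" by blast
      then show ?thesis using c2 by (blast intro: compat_compatc.intros AB_nrec2)
    next
      case c1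
      show ?thesis using c1 nrec2 by (intro ex4[of _ "Nrec \<rho> s' t r"]) (auto intro: compat_compatc.intros AB_B)
    next
      case c3
      show ?thesis using c3 nrec2 by (intro ex4[of _ "Nrec \<rho> s t r'"]) (auto intro: compat_compatc.intros AB_B)
    next
      case rt
      then show ?thesis
      proof (cases rule: rootA.cases)
        case nrec0
        then show ?thesis by (intro ex4[of _ s]) (auto intro: compat_compatc.intros rootA.intros)
      next
        case (nrecS n)
        have "stepAB\<^sup>*\<^sup>* (App (App t (num n)) (Nrec \<rho> s t (num n))) (App (App u (num n)) (Nrec \<rho> s u (num n)))"
          using nrec2 by (intro AB_app2 AB_nrec) (auto intro: AB_B)
        then show ?thesis using nrecS
          by (intro ex4[of _ "App (App t (num n)) (Nrec \<rho> s t (num n))"])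
            (auto intro: compat_compatc.intros rootA.intros)
      next
        case (muNrec \<sigma> c)
        have "ctxR (CNrec \<rho> (liftM 0 s) (liftM 0 t) Hole) (CNrec \<rho> (liftM 0 s) (liftM 0 u) Hole)"
          using nrec2 by (auto intro!: ctxR.intros intro: BLM)
        then show ?thesis using muNrec
          by (intro ex4[of _ "Mu \<sigma> (ssubc 0 0 (CNrec \<rho> (liftM 0 s) (liftM 0 t) Hole) c)"])
            (auto intro: compat_compatc.intros rootA.intros AB_mu CRss)
      qed
    qed
  qed
next
  case (nrec3 t u \<rho> s r)
  show ?case
  proof (intro allI impI)
    fix t3 assume A: "AA (Nrec \<rho> s r u) t3"
    show "\<exists>t4. AA (Nrec \<rho> s r t) t4 \<and> stepAB\<^sup>*\<^sup>* t4 t3"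
    proof (cases "rootBt t u")
      case True
      then obtain \<sigma> where "t = Mu \<sigma> (Cmd 0 (liftM 0 u))" using rootBt_inv by blast
      then show ?thesis using CRgen[OF CR_nrec A] by simp
    next
      case nr: False
      from AAinv_Nrec[OF A] consider (c1) s' where "t3 = Nrec \<rho> s' r u" "AA s s'"
        | (c2) r' where "t3 = Nrec \<rho> s r' u" "AA r r'"
        | (c3) u' where "t3 = Nrec \<rho> s r u'" "AA u u'" | (rt) "rootA (Nrec \<rho> s r u) t3" by blast
      then show ?thesis
      proof cases
        case c3
        with nrec3 obtain t4 where "AA t t4" "stepAB\<^sup>*\<^sup>* t4 u'" by blast
        then show ?thesis using c3 by (blast intro: compat_compatc.intros AB_nrec3)
      next
        case c1
        show ?thesis using c1 nrec3 by (intro ex4[of _ "Nrec \<rho> s' r t"]) (auto intro: compat_compatc.intros AB_B)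
      next
        case c2
        show ?thesis using c2 nrec3 by (intro ex4[of _ "Nrec \<rho> s r' t"]) (auto intro: compat_compatc.intros AB_B)
      next
        case rt
        then show ?thesis
        proof (cases rule: rootA.cases)
          case nrec0
          then show ?thesis using BBinv_Zero nrec3 nr by blast
        next
          case (nrecS n)
          then obtain y where y: "t = S y" "BB y (num n)" using BBinv_S nrec3 nr by blast
          have fin: "AA (Nrec \<rho> s r (S (num n))) t3" using nrecS by (auto intro: compat_compatc.intros rootA.intros)
          from N[OF y(2)] show ?thesis
          proof
            assume "\<exists>\<sigma>. y = Mu \<sigma> (Cmd 0 (num n))"
            then obtain \<sigma> where yy: "y = Mu \<sigma> (Cmd 0 (num n))" by blast
            have a: "AA (Nrec \<rho> s r t) (Nrec \<rho> s r (Mu \<sigma> (Cmd 0 (S (num n)))))"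
              using rootA.muS[of \<sigma> "Cmd 0 (num n)"] y yy by (auto intro: compat_compatc.intros)
            have b: "BB (Nrec \<rho> s r (Mu \<sigma> (Cmd 0 (S (num n))))) (Nrec \<rho> s r (S (num n)))"
              using muEta'[of \<sigma> "S (num n)"] by (auto intro: compat_compatc.intros)
            show ?thesis by (rule ex4[OF a rtranclp_trans[OF AB_B[OF b] AB_A[OF fin]]])
          next
            assume "\<exists>y'. AA y y' \<and> stepAB\<^sup>*\<^sup>* y' (num n)"
            then obtain y' where yy: "AA y y'" "stepAB\<^sup>*\<^sup>* y' (num n)" by blast
            have a: "AA (Nrec \<rho> s r t) (Nrec \<rho> s r (S y'))" using y yy by (auto intro: compat_compatc.intros)
            have b: "stepAB\<^sup>*\<^sup>* (Nrec \<rho> s r (S y')) (Nrec \<rho> s r (S (num n)))"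
              using yy by (auto intro: AB_nrec3 AB_S)
            show ?thesis by (rule ex4[OF a rtranclp_trans[OF b AB_A[OF fin]]])
          qed
        next
          case (muNrec \<sigma> c)
          then obtain c0 where c0: "t = Mu \<sigma> c0" "BBc c0 c" using BBinv_Mu nrec3 nr by blast
          have "AA (Nrec \<rho> s r t) (Mu \<sigma> (ssubc 0 0 (CNrec \<rho> (liftM 0 s) (liftM 0 r) Hole) c0))"
            using c0 by (auto intro: compat_compatc.intros rootA.intros)
          moreover have "stepAB\<^sup>*\<^sup>* (Mu \<sigma> (ssubc 0 0 (CNrec \<rho> (liftM 0 s) (liftM 0 r) Hole) c0)) t3"
            using muNrec c0 LS_B(2) by (auto simp: ssub_gsub intro: AB_mu)
          ultimately show ?thesis by blast
        qed
      qed
    qed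
  qed
next
  case (rootc c d)
  then obtain a \<rho> c' where cd: "c = Cmd a (Mu \<rho> c')" "d = gsubc (rn (ga a)) c'" using rootBc_inv by blast
  show ?case
  proof (intro allI impI)
    fix c3 assume "AAc d c3"
    then obtain c'' where "AAc c' c''" "c3 = gsubc (rn (ga a)) c''" using RF(2) cd by blast
    moreover have "BBc (Cmd a (Mu \<rho> c'')) (gsubc (rn (ga a)) c'')" by (rule compat_compatc.rootc, rule rename')
    ultimately show "\<exists>c4. AAc c c4 \<and> ABc\<^sup>*\<^sup>* c4 c3" using cd
      by (blast intro: compat_compatc.intros ABc_B)
  qed
next
  case (cmd t u i)
  show ?case
  proof (intro allI impI)
    fix c3 assume "AAc (Cmd i u) c3"
    then obtain u' where "c3 = Cmd i u'" "AA u u'" using AAcinv by blast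
    with cmd obtain t4 where "AA t t4" "stepAB\<^sup>*\<^sup>* t4 u'" by blast
    then show "\<exists>c4. AAc (Cmd i t) c4 \<and> ABc\<^sup>*\<^sup>* c4 c3" using \<open>c3 = _\<close>
      by (blast intro: compat_compatc.intros ABc_cmd)
  qed
qed

theorem mainTheorem16:
  shows "(\<forall>t1 t2 t3. stepB t1 t2 \<and> stepA t2 t3 \<longrightarrow>
            (\<exists>t4. stepA t1 t4 \<and> stepAB\<^sup>*\<^sup>* t4 t3))
       \<and> (\<forall>t1 t2 t3. stepB\<^sup>*\<^sup>* t1 t2 \<and> stepA t2 t3 \<longrightarrow>
            (\<exists>t4. stepA t1 t4 \<and> stepAB\<^sup>*\<^sup>* t4 t3))"
proof -
  have one: "\<And>t1 t2 t3. BB t1 t2 \<Longrightarrow> AA t2 t3 \<Longrightarrow> \<exists>t4. AA t1 t4 \<and> stepAB\<^sup>*\<^sup>* t4 t3"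
    using M(1) by blast
  have two: "\<And>t1 t2 t3. BB\<^sup>*\<^sup>* t1 t2 \<Longrightarrow> AA t2 t3 \<Longrightarrow> \<exists>t4. AA t1 t4 \<and> stepAB\<^sup>*\<^sup>* t4 t3"
  proof -
    fix t1 t2 t3
    assume "BB\<^sup>*\<^sup>* t1 t2" "AA t2 t3"
    then show "\<exists>t4. AA t1 t4 \<and> stepAB\<^sup>*\<^sup>* t4 t3"
    proof (induct arbitrary: t3 rule: converse_rtranclp_induct)
      case base then show ?case by blast
    next
      case (step x y)
      then obtain t4' where "AA y t4'" "stepAB\<^sup>*\<^sup>* t4' t3" by blast
      moreover from one[OF step(1) this(1)] obtain t4 where "AA x t4" "stepAB\<^sup>*\<^sup>* t4 t4'" by blast
      ultimately show ?case by (blast intro: rtranclp_trans)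
    qed
  qed
  show ?thesis unfolding stepA_def stepB_def using one two by blast
qed

end
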